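(* Let $(a_n)_{n\ge 0}$ be the sequence of real numbers defined by $a_0=a_1=0$, $a_2=1$ and, for $n\ge 3$, \[ a_n \;=\; \tfrac{19}{12}(n+1)-3 \;+\; \frac{6}{n^2(n-1)}\sum_{p=1}^{n}(p-1)(n-p)\,a_{p-1}. \] Then for all $n\ge 4$, \[ a_n \;=\; \tfrac{19}{6}n-\tfrac{37}{5}H_n+\tfrac{1183}{100}-\tfrac{37}{5}\,\frac{H_n}{n}-\tfrac{71}{300}\,\frac1n , \] and in particular $a_n\sim \tfrac{19}{6}n$ as $n\to\infty$.
   Context: $H_n=\sum_{k=1}^n 1/k$ denotes the $n$-th harmonic number. (In the paper, $a_n=\mathbb E[C_n]$ is the expected number of key comparisons made by Quickselect using Yaroslavskiy's dual-pivot partitioning when searching for a uniformly random rank in a uniformly random permutation of $n$ distinct keys; $\tfrac{19}{12}(n+1)-3$ is the expected number of comparisons of one partitioning step.) *)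

theory Defs
  imports "HOL-Analysis.Analysis" "HOL-Library.Landau_Symbols"
begin

end

theory Submission imports Defs "HOL-Real_Asymp.Real_Asymp" begin
lemma sum_shift1: "(\<Sum>p=1..n. g (p::nat)) = (\<Sum>k<n. g (Suc k))"
  by (induction n) auto

definition fc :: "real \<Rightarrow> real \<Rightarrow> real" where
  "fc m H = 19/6 * m - 37/5 * H + 1183/100 - 37/5 * H / m - 71/300 * (1 / m)"
definition cc :: "real \<Rightarrow> real" where "cc m = 19/12 * (m + 1) - 3"
definition GG :: "real \<Rightarrow> real \<Rightarrow> real" where "GG x m = (x - cc m) * m^2 * (m - 1) / 6"

lemma GG_fc: "m \<noteq> 0 \<Longrightarrow> GG (fc m H) m =
   (19/6 * m^2 - 37/5 * H * (m+1) + 1183/100 * m - 71/300 - m * cc m) * m * (m - 1) / 6"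
  unfolding GG_def fc_def by (simp add: field_simps power2_eq_square)

lemma mfc: "m \<noteq> 0 \<Longrightarrow> m * fc m H = 19/6 * m^2 - 37/5 * H * (m+1) + 1183/100 * m - 71/300"
  unfolding fc_def by (simp add: field_simps power2_eq_square)

lemma closed_rec:
  fixes h :: real and n :: real
  assumes "n \<ge> 4"
  shows "GG (fc (n+2) (h + 1/(n+1) + 1/(n+2))) (n+2) - 2 * GG (fc (n+1) (h + 1/(n+1))) (n+1)
          + GG (fc n h) n = n * fc n h"
proof -
  have nz: "n + 1 \<noteq> 0" "n + 2 \<noteq> 0" "n \<noteq> 0" using assms by auto
  define k where "k = 1/(n+1)"
  define j where "j = 1/(n+2)"
  have k: "k * (n+1) = 1" and j: "j * (n+2) = 1" using nz by (auto simp: k_def j_def)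
  show ?thesis
    unfolding GG_fc[OF nz(1)] GG_fc[OF nz(2)] GG_fc[OF nz(3)] mfc[OF nz(3)]
    unfolding k_def[symmetric] j_def[symmetric] cc_def
    using k j by algebra
qed

lemma GG_inj: "m > 1 \<Longrightarrow> GG x m = GG y m \<Longrightarrow> x = y"
  unfolding GG_def by (simp add: power2_eq_square)

lemma harm_over_n: "(\<lambda>n. harm n / real n) \<longlonglongrightarrow> 0"
proof -
  have 1: "(\<lambda>n. (harm n - ln (real n)) * (1 / real n)) \<longlonglongrightarrow> euler_mascheroni * 0"
    by (intro tendsto_mult euler_mascheroni_LIMSEQ) real_asymp
  have 2: "(\<lambda>n. ln (real n) / real n) \<longlonglongrightarrow> 0" by real_asymp
  have "(\<lambda>n. (harm n - ln (real n)) * (1 / real n) + ln (real n) / real n) \<longlonglongrightarrow> euler_mascheroni * 0 + 0"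
    by (intro tendsto_add 1 2)
  then show ?thesis by (simp add: diff_divide_distrib)
qed

theorem proposition5p1:
  fixes a :: "nat \<Rightarrow> real"
  assumes a0: "a 0 = 0" and a1: "a 1 = 0" and a2: "a 2 = 1"
    and rec: "\<And>n. n \<ge> 3 \<Longrightarrow>
       a n = 19/12 * (real n + 1) - 3
             + 6 / (real n ^ 2 * (real n - 1)) *
               (\<Sum>p=1..n. (real p - 1) * (real n - real p) * a (p - 1))"
  shows "(\<forall>n\<ge>4. a n = 19/6 * real n - 37/5 * harm n + 1183/100
                     - 37/5 * harm n / real n - 71/300 * (1 / real n))
         \<and> a \<sim>[at_top] (\<lambda>n. 19/6 * real n)"
proof -
  define T where "T n = (\<Sum>k<n. real k * (real n - 1 - real k) * a k)" for n
  have rec': "a n = cc (real n) + 6 / (real n ^ 2 * (real n - 1)) * T n" if "n \<ge> 3" for n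
  proof -
    have "(\<Sum>p=1..n. (real p - 1) * (real n - real p) * a (p - 1)) = T n"
      unfolding sum_shift1 T_def by (intro sum.cong) (auto simp: algebra_simps)
    then show ?thesis using rec[OF that] by (simp add: cc_def)
  qed
  have GT: "GG (a n) (real n) = T n" if "n \<ge> 3" for n
  proof -
    have "real n \<ge> 3" using that by simp
    then have "real n ^ 2 * (real n - 1) \<noteq> 0" by simp
    then show ?thesis unfolding GG_def using rec'[OF that] by (simp add: field_simps)
  qed
  have T1: "T (Suc n) - T n = (\<Sum>k<n. real k * a k)" for n
    unfolding T_def by (simp add: sum_subtractf[symmetric] algebra_simps)
  have T2: "T (n+2) - 2 * T (n+1) + T n = real n * a n" for n
    using T1[of "Suc n"] T1[of n] by (simp add: algebra_simps)
  have R: "GG (a (n+2)) (real n + 2) - 2 * GG (a (n+1)) (real n + 1) + GG (a n) (real n) = real n * a n"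
    if "n \<ge> 3" for n
    using T2[of n] GT[of n] GT[of "n+1"] GT[of "n+2"] that by (simp add: add_ac)
  define F where "F n = fc (real n) (harm n)" for n
  have a3: "a 3 = 10/3"
    using rec'[of 3] by (simp add: T_def numeral_3_eq_3 a0 a1[simplified] a2 cc_def)
  have a4: "a 4 = 31/6"
    using rec'[of 4] by (simp add: T_def eval_nat_numeral a0 a1[simplified] a2[unfolded numeral_2_eq_2] a3[simplified eval_nat_numeral] cc_def)
  have a4': "a 4 = F 4"
    by (simp add: a4 F_def fc_def harm_expand)
  have a5': "a 5 = F 5"
  proof -
    have "GG (a 5) 5 = GG (F 5) 5"
      using R[of 3] a3 a4 by (simp add: F_def GG_def fc_def harm_expand cc_def)
    then show ?thesis by (rule GG_inj[rotated]) simp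
  qed
  have ind: "a (n+4) = F (n+4) \<and> a (n+5) = F (n+5)" for n
  proof (induction n)
    case 0
    then show ?case using a4' a5' by simp
  next
    case (Suc n)
    have e1: "harm (n+5) = harm (n+4) + 1/(real (n+4) + 1)"
    proof -
      have "harm (Suc (n+4)) = harm (n+4) + inverse (real (Suc (n+4)))" by (rule harm_Suc)
      then show ?thesis by (simp add: inverse_eq_divide add_ac)
    qed
    have e2: "harm (n+6) = harm (n+4) + 1/(real (n+4) + 1) + 1/(real (n+4) + 2)"
    proof -
      have "harm (Suc (n+5)) = harm (n+5) + inverse (real (Suc (n+5)))" by (rule harm_Suc)
      then show ?thesis using e1 by (simp add: inverse_eq_divide add_ac)
    qed
    have cr: "GG (F (n+6)) (real (n+4) + 2) - 2 * GG (F (n+5)) (real (n+4) + 1)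
          + GG (F (n+4)) (real (n+4)) = real (n+4) * F (n+4)"
      using closed_rec[of "real (n+4)" "harm (n+4)"] unfolding F_def e1 e2
      by (simp add: add_ac)
    have r: "GG (a (n+6)) (real (n+4) + 2) - 2 * GG (a (n+5)) (real (n+4) + 1)
          + GG (a (n+4)) (real (n+4)) = real (n+4) * a (n+4)"
      using R[of "n+4"] by (simp add: add_ac)
    have "GG (a (n+6)) (real (n+4) + 2) = GG (F (n+6)) (real (n+4) + 2)"
      using cr r Suc.IH by simp
    then have "a (n+6) = F (n+6)" by (rule GG_inj[rotated]) simp
    then show ?case using Suc.IH by (simp add: add_ac)
  qed
  have closed: "a n = F n" if "n \<ge> 4" for n
    using ind[of "n-4"] that by simp
  show ?thesis
  proof
    show "\<forall>n\<ge>4. a n = 19/6 * real n - 37/5 * harm n + 1183/100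
                     - 37/5 * harm n / real n - 71/300 * (1 / real n)"
      using closed by (simp add: F_def fc_def)
  next
    have ev: "eventually (\<lambda>n. a n = F n) at_top"
      using closed by (auto simp: eventually_at_top_linorder)
    have lim0: "(\<lambda>n. 1 - 222/95 * (harm n / real n) + 3549/950 * (1/real n)
                 - 222/95 * (harm n / real n) * (1 / real n) - 71/950 * (1/real n) * (1/real n))
               \<longlonglongrightarrow> 1 - 222/95 * 0 + 3549/950 * 0 - 222/95 * 0 * 0 - 71/950 * 0 * 0"
      by (intro tendsto_intros harm_over_n lim_const_over_n)
    have lim: "(\<lambda>n. 1 - 222/95 * (harm n / real n) + 3549/950 * (1/real n)
                 - 222/95 * (harm n / real n) * (1 / real n) - 71/950 * (1/real n) * (1/real n))
               \<longlonglongrightarrow> 1" using lim0 by simp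
    have "(\<lambda>n. F n / (19/6 * real n)) \<longlonglongrightarrow> 1"
    proof (rule Lim_transform_eventually[OF lim])
      show "\<forall>\<^sub>F n in sequentially. 1 - 222/95 * (harm n / real n) + 3549/950 * (1/real n)
                 - 222/95 * (harm n / real n) * (1 / real n) - 71/950 * (1/real n) * (1/real n)
             = F n / (19/6 * real n)"
        using eventually_gt_at_top[of 0]
        by eventually_elim (simp add: F_def fc_def field_simps power2_eq_square)
    qed
    then have "F \<sim>[at_top] (\<lambda>n. 19/6 * real n)" by (rule asymp_equivI')
    then show "a \<sim>[at_top] (\<lambda>n. 19/6 * real n)"
      using asymp_equiv_cong[OF ev, of "\<lambda>n. 19/6 * real n" "\<lambda>n. 19/6 * real n"] by simp
  qed
qed
end
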